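(* Let $g:\mathbb N\to\mathbb N$ be superlinear. For every $\alpha\ge1$ there are $\eta,\gamma'\in(0,1)$ such that the subtractive adversary $V_{\mathrm{sub},\eta}$ satisfies: for every $m\ge1$ there are $p\in\mathcal{C}_g$ and $Q\in\Delta(\mathcal{C}_g)$ such that (1) for every $q\in\mathrm{supp}(Q)$, $d_{\mathrm{TV}}(p,q)\ge 4\alpha\,\mathrm{budget}(V_{\mathrm{sub},\eta})+4\gamma'$; and (2) $d_{\mathrm{TV}}(V_{\mathrm{sub},\eta}(p^m),V_{\mathrm{sub},\eta}(|Q|^m))\le\frac18$.
   Context: Let $\{B_i\}_{i\in\mathbb N}$ enumerate all finite subsets of $\mathbb N$. For $i,j,k\in\mathbb N$, $p_{i,j,k}=(1-\frac1j)\delta_{(0,0)}+(\frac1j-\frac1k)U_{B_i\times\{2j+1\}}+\frac1k\delta_{(i,2j+2)}$ on $\mathbb N\times\mathbb N$, and $\mathcal C_g=\{p_{i,j,g(j)}:i,j\in\mathbb N\}$. Superlinear: $g(j)/j\to\infty$. Samples are multisets. For a sample $S$: $\mathrm{constants}(S)$ = elements equal to $(0,0)$, $\mathrm{odds}(S)$ = elements of form $(o,2j+1)$, $\mathrm{ind}(S)$ = elements of form $(i,2j+2)$ ($i,j,o\in\mathbb N$), $\mathrm{noind}(S)=\mathrm{constants}(S)\cup\mathrm{odds}(S)$ (multisets). $\mathrm{choose}(S,n)$ is a uniformly random sub-multiset of $S$ of size $n$. The subtractive adversary is $V_{\mathrm{sub},\eta}(S)=\mathrm{choose}(\mathrm{noind}(S),(1-\eta)|S|)$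 if $|\mathrm{ind}(S)|\le\eta|S|$, and $V_{\mathrm{sub},\eta}(S)=\mathrm{noind}(S)\cup\mathrm{choose}(\mathrm{ind}(S),|\mathrm{ind}(S)|-\eta|S|)$ otherwise; its budget (fraction of points removed) is $\mathrm{budget}(V_{\mathrm{sub},\eta})=\eta$. For an adversary $V$ and distribution $P$ on samples, $V(P)$ is the distribution of $V(S)$, $S\sim P$. For $Q$ a distribution over $\mathcal C_g$, $|Q|^m$ is the distribution of $S$ obtained by drawing $q\sim Q$ then $S\sim q^m$. *)

theory Defs
  imports "HOL-Probability.Probability" "HOL-Library.Multiset"
begin

text \<open>Ground set N x N (N = nat, including 0). Distributions are pmfs on nat \<times> nat.\<close>

definition pijk :: "(nat \<Rightarrow> nat set) \<Rightarrow> nat \<Rightarrow> nat \<Rightarrow> nat \<Rightarrow> (nat \<times> nat) pmf" where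
  "pijk B i j k = embed_pmf (\<lambda>x.
      (1 - 1 / real j) * (if x = (0, 0) then 1 else 0)
    + (1 / real j - 1 / real k) * (indicator (B i \<times> {2 * j + 1}) x / real (card (B i)))
    + (1 / real k) * (if x = (i, 2 * j + 2) then 1 else 0))"

text \<open>Parameters for which the defining formula is a probability distribution.\<close>
definition valid_param :: "(nat \<Rightarrow> nat set) \<Rightarrow> (nat \<Rightarrow> nat) \<Rightarrow> nat \<Rightarrow> nat \<Rightarrow> bool" where
  "valid_param B g i j \<longleftrightarrow> 1 \<le> j \<and> j \<le> g j \<and> (B i = {} \<longrightarrow> g j = j)"

definition Cg :: "(nat \<Rightarrow> nat set) \<Rightarrow> (nat \<Rightarrow> nat) \<Rightarrow> (nat \<times> nat) pmf set" where
  "Cg B g = {pijk B i j (g j) | i j. valid_param B g i j}"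

definition superlinear :: "(nat \<Rightarrow> nat) \<Rightarrow> bool" where
  "superlinear g \<longleftrightarrow> filterlim (\<lambda>j. real (g j) / real j) at_top sequentially"

definition tv_dist :: "'a pmf \<Rightarrow> 'a pmf \<Rightarrow> real" where
  "tv_dist p q = (SUP A. \<bar>measure_pmf.prob p A - measure_pmf.prob q A\<bar>)"

fun sample_pmf :: "nat \<Rightarrow> 'a pmf \<Rightarrow> 'a multiset pmf" where
  "sample_pmf 0 p = return_pmf {#}"
| "sample_pmf (Suc m) p = bind_pmf p (\<lambda>x. map_pmf (add_mset x) (sample_pmf m p))"

text \<open>|Q|^m : draw q from Q, then m i.i.d. samples from q.\<close>
definition mix_sample_pmf :: "nat \<Rightarrow> 'a pmf pmf \<Rightarrow> 'a multiset pmf" where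
  "mix_sample_pmf m Q = bind_pmf Q (sample_pmf m)"

definition choose_mset :: "'a multiset \<Rightarrow> nat \<Rightarrow> 'a multiset pmf" where
  "choose_mset S n = pmf_of_set {T. T \<subseteq># S \<and> size T = n}"

definition is_const :: "nat \<times> nat \<Rightarrow> bool" where "is_const x \<longleftrightarrow> x = (0, 0)"
definition is_odd :: "nat \<times> nat \<Rightarrow> bool" where "is_odd x \<longleftrightarrow> odd (snd x)"
definition is_ind :: "nat \<times> nat \<Rightarrow> bool" where "is_ind x \<longleftrightarrow> even (snd x) \<and> 2 \<le> snd x"

definition ind :: "(nat \<times> nat) multiset \<Rightarrow> (nat \<times> nat) multiset" where
  "ind S = filter_mset is_ind S"
definition noind :: "(nat \<times> nat) multiset \<Rightarrow> (nat \<times> nat) multiset" where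
  "noind S = filter_mset is_const S + filter_mset is_odd S"

definition Vsub :: "real \<Rightarrow> (nat \<times> nat) multiset \<Rightarrow> (nat \<times> nat) multiset pmf" where
  "Vsub \<eta> S = (let r = nat \<lfloor>\<eta> * real (size S)\<rfloor> in
     if real (size (ind S)) \<le> \<eta> * real (size S)
     then choose_mset (noind S) (size S - r)
     else map_pmf (\<lambda>T. noind S + T) (choose_mset (ind S) (size (ind S) - r)))"

definition budget_sub :: "real \<Rightarrow> real" where "budget_sub \<eta> = \<eta>"

definition adv_apply :: "('a \<Rightarrow> 'b pmf) \<Rightarrow> 'a pmf \<Rightarrow> 'b pmf" where
  "adv_apply V P = bind_pmf P V"

end

theory Submission
  imports Defs
begin


lemma sample_Suc':
  "sample_pmf (Suc m) p = bind_pmf (sample_pmf m p) (\<lambda>S. map_pmf (\<lambda>x. add_mset x S) p)"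
  by (simp add: map_pmf_def bind_commute_pmf[of p])

lemma set_sample:
  "set_pmf (sample_pmf m p) \<subseteq> {S. set_mset S \<subseteq> set_pmf p \<and> size S = m}"
  by (induction m) fastforce+

lemma finite_msets:
  assumes "finite X" shows "finite {S. set_mset S \<subseteq> X \<and> size S = m}"
proof -
  have "{S. set_mset S \<subseteq> X \<and> size S = m} \<subseteq> mset ` {xs. set xs \<subseteq> X \<and> length xs = m}"
  proof
    fix S assume "S \<in> {S. set_mset S \<subseteq> X \<and> size S = m}"
    then show "S \<in> mset ` {xs. set xs \<subseteq> X \<and> length xs = m}"
      by (metis (mono_tags, lifting) ex_mset image_eqI mem_Collect_eq set_mset_mset size_mset)
  qed
  moreover have "finite {xs. set xs \<subseteq> X \<and> length xs = m}"
    using finite_lists_length_eq[OF assms] by simp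
  ultimately show ?thesis by (meson finite_imageI finite_subset)
qed

lemma sample_map:
  "sample_pmf m (map_pmf f p) = map_pmf (image_mset f) (sample_pmf m p)"
  by (induction m) (simp_all add: bind_map_pmf map_bind_pmf map_pmf_comp)

lemma pmf_map_add:
  "pmf (map_pmf (add_mset x) M) S = (if x \<in># S then pmf M (S - {#x#}) else 0)"
proof -
  have "add_mset x -` {S} = (if x \<in># S then {S - {#x#}} else {})"
    by (auto simp: insert_DiffM)
  then show ?thesis by (simp add: pmf_map measure_pmf_single)
qed

lemma measure_bind_real:
  "measure_pmf.prob (bind_pmf M N) X = (\<integral>x. measure_pmf.prob (N x) X \<partial>M)"
proof -
  have "emeasure (bind_pmf M N) X = (\<integral>\<^sup>+x. emeasure (N x) X \<partial>M)" by simp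
  also have "\<dots> = (\<integral>\<^sup>+x. ennreal (measure_pmf.prob (N x) X) \<partial>M)"
    by (simp add: measure_pmf.emeasure_eq_measure)
  also have "\<dots> = ennreal (\<integral>x. measure_pmf.prob (N x) X \<partial>M)"
    by (intro nn_integral_eq_integral measure_pmf.integrable_const_bound[where B=1]) auto
  finally show ?thesis
    by (simp add: measure_pmf.emeasure_eq_measure)
qed



definition pF :: "(nat \<Rightarrow> nat set) \<Rightarrow> nat \<Rightarrow> nat \<Rightarrow> nat \<Rightarrow> nat \<times> nat \<Rightarrow> real" where
  "pF B i j k = (\<lambda>x.
      (1 - 1 / real j) * (if x = (0, 0) then 1 else 0)
    + (1 / real j - 1 / real k) * (indicator (B i \<times> {2 * j + 1}) x / real (card (B i)))
    + (1 / real k) * (if x = (i, 2 * j + 2) then 1 else 0))"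

lemma pmf_pijk:
  assumes fin: "finite (B i)" and ne: "B i \<noteq> {}" and j: "1 \<le> j" and jk: "j \<le> k"
  shows "pmf (pijk B i j k) x = pF B i j k x"
proof -
  have jr: "1 \<le> real j" using j by simp
  have jkr: "real j \<le> real k" using jk by simp
  have c1: "0 \<le> 1 - 1 / real j" using jr by (simp add: field_simps)
  have c2: "0 \<le> 1 / real j - 1 / real k" using jr jkr by (simp add: frac_le)
  have nn: "\<And>x. 0 \<le> pF B i j k x"
    unfolding pF_def using c1 c2 by (intro add_nonneg_nonneg mult_nonneg_nonneg) auto
  define X where "X = insert (0,0) (insert (i, 2*j+2) (B i \<times> {2*j+1}))"
  have finX: "finite X" using fin by (simp add: X_def)
  have zero: "\<And>x. x \<notin> X \<Longrightarrow> pF B i j k x = 0"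
    by (auto simp: pF_def X_def indicator_def)
  have s1: "(\<Sum>x\<in>X. (if x = (0::nat, 0::nat) then 1 else 0::real)) = 1"
    using finX by (simp add: X_def)
  have s3: "(\<Sum>x\<in>X. (if x = (i, 2*j+2) then 1 else 0::real)) = 1"
    using finX by (simp add: X_def)
  have s2: "(\<Sum>x\<in>X. indicator (B i \<times> {2 * j + 1}) x / real (card (B i))) = 1"
  proof -
    have "(\<Sum>x\<in>X. indicator (B i \<times> {2 * j + 1}) x / real (card (B i)))
        = (\<Sum>x\<in>X. indicator (B i \<times> {2 * j + 1}) x) / real (card (B i))"
      by (simp add: sum_divide_distrib)
    also have "(\<Sum>x\<in>X. indicator (B i \<times> {2 * j + 1}) x :: real) = real (card (B i \<times> {2 * j + 1}))"
    proof -
      have "X \<inter> (B i \<times> {2 * j + 1}) = B i \<times> {2 * j + 1}" by (auto simp: X_def)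
      moreover have "(\<Sum>x\<in>X. indicator (B i \<times> {2 * j + 1}) x :: real) = real (card (X \<inter> (B i \<times> {2 * j + 1})))"
        using finX by (simp add: indicator_def sum.If_cases Int_def)
      ultimately show ?thesis by simp
    qed
    also have "card (B i \<times> {2 * j + 1}) = card (B i)" by (simp add: card_cartesian_product)
    finally show ?thesis using fin ne by simp
  qed
  have "(\<Sum>x\<in>X. pF B i j k x) = (1 - 1 / real j) + (1 / real j - 1 / real k) + 1 / real k"
    unfolding pF_def sum.distrib sum_distrib_left[symmetric] s1 s2 s3 by simp
  also have "\<dots> = 1" by simp
  finally have sum1: "(\<Sum>x\<in>X. pF B i j k x) = 1" .
  have "(\<integral>\<^sup>+x. ennreal (pF B i j k x) \<partial>count_space UNIV) = (\<Sum>x\<in>X. ennreal (pF B i j k x))"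
    using finX zero by (intro nn_integral_count_space') auto
  also have "\<dots> = ennreal (\<Sum>x\<in>X. pF B i j k x)" using nn by (simp add: sum_ennreal)
  finally have prob: "(\<integral>\<^sup>+x. ennreal (pF B i j k x) \<partial>count_space UNIV) = 1" using sum1 by simp
  show ?thesis
    unfolding pijk_def pF_def[symmetric]
    using pmf_embed_pmf[of "pF B i j k", OF nn prob] by simp
qed



lemma sample_weight:
  assumes fin: "finite (set_pmf p)" and w: "\<And>x. pmf q x = w x * pmf p x"
  shows "pmf (sample_pmf m q) S = prod_mset (image_mset w S) * pmf (sample_pmf m p) S"
proof (induction m arbitrary: S)
  case 0
  then show ?case by (cases "S = {#}") (auto simp: pmf_return)
next
  case (Suc m)
  let ?A = "set_pmf p"
  have sub: "\<And>x. x \<in> set_pmf q \<Longrightarrow> x \<in> ?A"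
    using w by (auto simp: set_pmf_eq)
  have key: "\<And>x. x \<in># S \<Longrightarrow> w x * prod_mset (image_mset w (S - {#x#})) = prod_mset (image_mset w S)"
    by (metis image_mset_add_mset insert_DiffM prod_mset.add_mset)
  have "pmf (sample_pmf (Suc m) q) S = (\<integral>x. pmf (map_pmf (add_mset x) (sample_pmf m q)) S \<partial>q)"
    by (simp add: pmf_bind)
  also have "\<dots> = (\<Sum>x\<in>?A. pmf (map_pmf (add_mset x) (sample_pmf m q)) S * pmf q x)"
    using fin sub by (intro integral_measure_pmf_real) auto
  also have "\<dots> = (\<Sum>x\<in>?A. prod_mset (image_mset w S) * (pmf (map_pmf (add_mset x) (sample_pmf m p)) S * pmf p x))"
  proof (intro sum.cong refl)
    fix x assume "x \<in> ?A"
    show "pmf (map_pmf (add_mset x) (sample_pmf m q)) S * pmf q x =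
          prod_mset (image_mset w S) * (pmf (map_pmf (add_mset x) (sample_pmf m p)) S * pmf p x)"
    proof (cases "x \<in># S")
      case True
      then show ?thesis
        using key[OF True] by (simp add: pmf_map_add Suc w algebra_simps)
    next
      case False
      then show ?thesis by (simp add: pmf_map_add)
    qed
  qed
  also have "\<dots> = prod_mset (image_mset w S) * (\<Sum>x\<in>?A. pmf (map_pmf (add_mset x) (sample_pmf m p)) S * pmf p x)"
    by (simp add: sum_distrib_left)
  also have "(\<Sum>x\<in>?A. pmf (map_pmf (add_mset x) (sample_pmf m p)) S * pmf p x) = pmf (sample_pmf (Suc m) p) S"
    using fin by (simp add: pmf_bind integral_measure_pmf_real)
  finally show ?case .
qed



lemma finite_sample: "finite (set_pmf p) \<Longrightarrow> finite (set_pmf (sample_pmf m p))"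
  using set_sample finite_msets by (metis finite_subset)

lemma card_set_mset_le': "card (set_mset M) \<le> size M"
  by (induction M) (auto simp: card_insert_if)

lemma integral_bind_fin:
  fixes f :: "'b \<Rightarrow> real"
  assumes finM: "finite (set_pmf M)" and finA: "finite A" and sub: "\<And>x. x \<in> set_pmf M \<Longrightarrow> set_pmf (N x) \<subseteq> A"
  shows "(\<integral>y. f y \<partial>bind_pmf M N) = (\<integral>x. (\<integral>y. f y \<partial>N x) \<partial>M)"
proof -
  have "(\<integral>y. f y \<partial>bind_pmf M N) = (\<Sum>a\<in>A. f a * pmf (bind_pmf M N) a)"
    using finA sub by (intro integral_measure_pmf_real) auto
  also have "\<dots> = (\<Sum>a\<in>A. f a * (\<Sum>x\<in>set_pmf M. pmf (N x) a * pmf M x))"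
    using finM by (simp add: pmf_bind integral_measure_pmf_real)
  also have "\<dots> = (\<Sum>a\<in>A. \<Sum>x\<in>set_pmf M. f a * pmf (N x) a * pmf M x)"
    by (simp add: sum_distrib_left mult_ac)
  also have "\<dots> = (\<Sum>x\<in>set_pmf M. \<Sum>a\<in>A. f a * pmf (N x) a * pmf M x)"
    by (rule sum.swap)
  also have "\<dots> = (\<Sum>x\<in>set_pmf M. (\<Sum>a\<in>A. f a * pmf (N x) a) * pmf M x)"
    by (simp add: sum_distrib_right)
  also have "\<dots> = (\<Sum>x\<in>set_pmf M. (\<integral>y. f y \<partial>N x) * pmf M x)"
    using finA sub by (intro sum.cong refl arg_cong2[where f="(*)"] integral_measure_pmf_real[symmetric]) auto
  also have "\<dots> = (\<integral>x. (\<integral>y. f y \<partial>N x) \<partial>M)"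
    using finM by (intro integral_measure_pmf_real[symmetric]) auto
  finally show ?thesis .
qed

lemma expect_count:
  assumes fin: "finite (set_pmf p)"
  shows "(\<integral>S. real (size (filter_mset P S)) \<partial>sample_pmf m p) = real m * measure_pmf.prob p {x. P x}"
proof (induction m)
  case 0
  then show ?case by simp
next
  case (Suc m)
  let ?A = "{S. set_mset S \<subseteq> set_pmf p \<and> size S = Suc m}"
  have "(\<integral>S. real (size (filter_mset P S)) \<partial>sample_pmf (Suc m) p)
      = (\<integral>S. (\<integral>T. real (size (filter_mset P T)) \<partial>map_pmf (\<lambda>x. add_mset x S) p) \<partial>sample_pmf m p)"
    unfolding sample_Suc'
    apply (rule integral_bind_fin[where A="?A"])
    using finite_sample[OF fin] finite_msets[OF fin] set_sample[of m p] by force+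
  also have "\<dots> = (\<integral>S. (real (size (filter_mset P S)) + measure_pmf.prob p {x. P x}) \<partial>sample_pmf m p)"
  proof (intro Bochner_Integration.integral_cong refl)
    fix S
    have "(\<integral>T. real (size (filter_mset P T)) \<partial>map_pmf (\<lambda>x. add_mset x S) p)
        = (\<integral>x. real (size (filter_mset P S)) + indicator {x. P x} x \<partial>p)"
      unfolding integral_map_pmf by (intro Bochner_Integration.integral_cong refl) (auto simp: indicator_def)
    also have "\<dots> = real (size (filter_mset P S)) + measure_pmf.prob p {x. P x}"
      using fin by (simp add: integrable_measure_pmf_finite)
    finally show "(\<integral>T. real (size (filter_mset P T)) \<partial>map_pmf (\<lambda>x. add_mset x S) p)
        = real (size (filter_mset P S)) + measure_pmf.prob p {x. P x}" .
  qed
  also have "\<dots> = real m * measure_pmf.prob p {x. P x} + measure_pmf.prob p {x. P x}"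
    using finite_sample[OF fin, of m] Suc by (simp add: integrable_measure_pmf_finite)
  finally show ?case by (simp add: algebra_simps)
qed

lemma markov_count:
  assumes fin: "finite (set_pmf p)" and c: "0 < c"
  shows "measure_pmf.prob (sample_pmf m p) {S. c \<le> real (size (filter_mset P S))}
     \<le> real m * measure_pmf.prob p {x. P x} / c"
proof -
  have "measure_pmf.prob (sample_pmf m p) {S \<in> space (measure_pmf (sample_pmf m p)). c \<le> real (size (filter_mset P S))}
     \<le> (\<integral>S. real (size (filter_mset P S)) \<partial>sample_pmf m p) / c"
    using finite_sample[OF fin, of m] c
    by (intro integral_Markov_inequality_measure[where A="{}"]) (auto simp: integrable_measure_pmf_finite)
  then show ?thesis using expect_count[OF fin] by simp
qed

definition badp :: "('a \<Rightarrow> bool) \<Rightarrow> ('a \<Rightarrow> nat) \<Rightarrow> 'a multiset \<Rightarrow> bool" where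
  "badp Pd \<pi> S \<longleftrightarrow> \<not> (\<forall>d. count (image_mset \<pi> (filter_mset Pd S)) d \<le> 1)"

lemma coll_bound:
  assumes fin: "finite (set_pmf p)" and mu: "0 \<le> \<mu>"
    and mass: "\<And>D. finite D \<Longrightarrow> measure_pmf.prob p {x. Pd x \<and> \<pi> x \<in> D} \<le> real (card D) * \<mu>"
  shows "measure_pmf.prob (sample_pmf m p) {S. badp Pd \<pi> S} \<le> real m * real m * \<mu>"
proof (induction m)
  case 0
  then show ?case by (simp add: badp_def)
next
  case (Suc m)
  let ?M = "sample_pmf m p"
  have "measure_pmf.prob (sample_pmf (Suc m) p) {S. badp Pd \<pi> S}
      = (\<integral>S. measure_pmf.prob (map_pmf (\<lambda>x. add_mset x S) p) {S. badp Pd \<pi> S} \<partial>?M)"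
    unfolding sample_Suc' by (rule measure_bind_real)
  also have "\<dots> \<le> (\<integral>S. indicator {S. badp Pd \<pi> S} S + real m * \<mu> \<partial>?M)"
  proof (intro integral_mono_AE)
    show "integrable ?M (\<lambda>S. measure_pmf.prob (map_pmf (\<lambda>x. add_mset x S) p) {S. badp Pd \<pi> S})"
      using finite_sample[OF fin, of m] by (simp add: integrable_measure_pmf_finite)
    show "integrable ?M (\<lambda>S. indicator {S. badp Pd \<pi> S} S + real m * \<mu>)"
      using finite_sample[OF fin, of m] by (simp add: integrable_measure_pmf_finite)
    show "AE S in ?M. measure_pmf.prob (map_pmf (\<lambda>x. add_mset x S) p) {S. badp Pd \<pi> S}
        \<le> indicator {S. badp Pd \<pi> S} S + real m * \<mu>"
    proof (rule AE_pmfI)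
      fix S assume S: "S \<in> set_pmf ?M"
      then have sz: "size S = m" using set_sample by blast
      show "measure_pmf.prob (map_pmf (\<lambda>x. add_mset x S) p) {S. badp Pd \<pi> S}
        \<le> indicator {S. badp Pd \<pi> S} S + real m * \<mu>"
      proof (cases "badp Pd \<pi> S")
        case True
        have "measure_pmf.prob (map_pmf (\<lambda>x. add_mset x S) p) {S. badp Pd \<pi> S} \<le> 1" by simp
        also have "1 \<le> indicator {S. badp Pd \<pi> S} S + real m * \<mu>" using True mu by simp
        finally show ?thesis .
      next
        case False
        let ?D = "set_mset (image_mset \<pi> (filter_mset Pd S))"
        have sub: "(\<lambda>x. add_mset x S) -` {S. badp Pd \<pi> S} \<subseteq> {x. Pd x \<and> \<pi> x \<in> ?D}"
        proof
          fix x assume "x \<in> (\<lambda>x. add_mset x S) -` {S. badp Pd \<pi> S}"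
          then have b: "badp Pd \<pi> (add_mset x S)" by simp
          show "x \<in> {x. Pd x \<and> \<pi> x \<in> ?D}"
          proof (rule ccontr)
            assume nx: "x \<notin> {x. Pd x \<and> \<pi> x \<in> ?D}"
            have "\<forall>d. count (image_mset \<pi> (filter_mset Pd (add_mset x S))) d \<le> 1"
            proof
              fix d
              have c0: "count (image_mset \<pi> (filter_mset Pd S)) d \<le> 1" using False by (simp add: badp_def)
              show "count (image_mset \<pi> (filter_mset Pd (add_mset x S))) d \<le> 1"
              proof (cases "Pd x")
                case True
                then have "\<pi> x \<notin># image_mset \<pi> (filter_mset Pd S)" using nx by simp
                then show ?thesis using True c0 by (auto simp: count_eq_zero_iff)
              next
                case False
                then show ?thesis using c0 by simp
              qed
            qed
            then show False using b by (simp add: badp_def)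
          qed
        qed
        have "measure_pmf.prob (map_pmf (\<lambda>x. add_mset x S) p) {S. badp Pd \<pi> S}
            = measure_pmf.prob p ((\<lambda>x. add_mset x S) -` {S. badp Pd \<pi> S})"
          by (simp add: measure_map_pmf)
        also have "\<dots> \<le> measure_pmf.prob p {x. Pd x \<and> \<pi> x \<in> ?D}"
          using sub by (intro measure_pmf.finite_measure_mono) auto
        also have "\<dots> \<le> real (card ?D) * \<mu>" by (intro mass) simp
        also have "card ?D \<le> size (image_mset \<pi> (filter_mset Pd S))" by (rule card_set_mset_le')
        also have "\<dots> \<le> m" using sz size_filter_mset_lesseq[of Pd S] by simp
        finally have "measure_pmf.prob (map_pmf (\<lambda>x. add_mset x S) p) {S. badp Pd \<pi> S} \<le> real m * \<mu>"
          using mu by (simp add: mult_right_mono)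
        then show ?thesis using False by simp
      qed
    qed
  qed
  also have "\<dots> = measure_pmf.prob ?M {S. badp Pd \<pi> S} + real m * \<mu>"
    using finite_sample[OF fin, of m] by (simp add: integrable_measure_pmf_finite)
  also have "\<dots> \<le> real m * real m * \<mu> + real m * \<mu>" using Suc by simp
  also have "\<dots> \<le> real (Suc m) * real (Suc m) * \<mu>" using mu by (simp add: algebra_simps)
  finally show ?case .
qed



lemma prod_mset_nonneg':
  fixes w :: "'a \<Rightarrow> real"
  shows "(\<And>x. 0 \<le> w x) \<Longrightarrow> 0 \<le> prod_mset (image_mset w M)"
  by (induction M) auto

lemma main_bound:
  fixes p :: "'a pmf" and qs :: "'c \<Rightarrow> 'a pmf" and C :: "'c set"
    and \<rho> :: "'c \<Rightarrow> 'a \<Rightarrow> 'a" and w :: "'c \<Rightarrow> 'a \<Rightarrow> real"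
    and V :: "'a multiset \<Rightarrow> 'b pmf" and Good GL :: "'a multiset \<Rightarrow> bool"
  assumes fin: "finite (set_pmf p)" and finC: "finite C" and neC: "C \<noteq> {}"
    and wq: "\<And>c x. c \<in> C \<Longrightarrow> pmf (map_pmf (\<rho> c) (qs c)) x = w c x * pmf p x"
    and wnn: "\<And>c x. c \<in> C \<Longrightarrow> 0 \<le> w c x"
    and invG: "\<And>c S. c \<in> C \<Longrightarrow> Good (image_mset (\<rho> c) S) = Good S"
    and invV: "\<And>c S. c \<in> C \<Longrightarrow> Good S \<Longrightarrow> V (image_mset (\<rho> c) S) = V S"
    and avg: "\<And>S. S \<in> set_pmf (sample_pmf m p) \<Longrightarrow> GL S \<Longrightarrow>
                 (\<Sum>c\<in>C. prod_mset (image_mset (w c) S)) = real (card C)"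
    and eps: "measure_pmf.prob (sample_pmf m p) {S. \<not> Good S}
              + measure_pmf.prob (sample_pmf m p) {S. \<not> GL S} \<le> \<epsilon>"
  shows "measure_pmf.prob (bind_pmf (sample_pmf m p) V) A - \<epsilon>
         \<le> measure_pmf.prob (bind_pmf (bind_pmf (pmf_of_set C) (\<lambda>c. sample_pmf m (qs c))) V) A"
proof -
  let ?P = "sample_pmf m p"
  define f where "f S = measure_pmf.prob (V S) A" for S
  define ft where "ft S = (if Good S then f S else 0)" for S
  define SS where "SS = {S. set_mset S \<subseteq> set_pmf p \<and> size S = m}"
  have finSS: "finite SS" unfolding SS_def using finite_msets[OF fin] .
  have f01: "0 \<le> f S" "f S \<le> 1" for S by (auto simp: f_def)
  have ft01: "0 \<le> ft S" "ft S \<le> f S" for S using f01 by (auto simp: ft_def)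
  have intf: "integrable M f" for M :: "'a multiset pmf"
    using f01 by (intro measure_pmf.integrable_const_bound[where B=1]) auto
  have intft: "integrable M ft" for M :: "'a multiset pmf"
  proof -
    have "ft S \<le> 1" for S using ft01(2)[of S] f01(2)[of S] by linarith
    then show ?thesis using ft01 by (intro measure_pmf.integrable_const_bound[where B=1]) auto
  qed
  have ftinv: "ft (image_mset (\<rho> c) S) = ft S" if "c \<in> C" for c S
    using invG[OF that] invV[OF that] by (simp add: ft_def f_def)
  have suppq: "set_pmf (map_pmf (\<rho> c) (qs c)) \<subseteq> set_pmf p" if "c \<in> C" for c
    using wq[OF that] by (auto simp: set_pmf_eq)
  have Ic: "(\<integral>S. f S \<partial>sample_pmf m (qs c)) \<ge>
            (\<Sum>S\<in>SS. ft S * (prod_mset (image_mset (w c) S) * pmf ?P S))" if c: "c \<in> C" for c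
  proof -
    have "(\<integral>S. f S \<partial>sample_pmf m (qs c)) \<ge> (\<integral>S. ft S \<partial>sample_pmf m (qs c))"
      using intf intft ft01 by (intro integral_mono) auto
    moreover have "(\<integral>S. ft S \<partial>sample_pmf m (qs c)) = (\<integral>S. ft (image_mset (\<rho> c) S) \<partial>sample_pmf m (qs c))"
      using ftinv[OF c] by simp
    moreover have "\<dots> = (\<integral>S. ft S \<partial>sample_pmf m (map_pmf (\<rho> c) (qs c)))"
      by (simp add: sample_map)
    moreover have "\<dots> = (\<Sum>S\<in>SS. ft S * pmf (sample_pmf m (map_pmf (\<rho> c) (qs c))) S)"
    proof (rule integral_measure_pmf_real[OF finSS])
      fix S assume "S \<in> set_pmf (sample_pmf m (map_pmf (\<rho> c) (qs c)))"
      then show "S \<in> SS" using set_sample[of m "map_pmf (\<rho> c) (qs c)"] suppq[OF c]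
        unfolding SS_def by blast
    qed
    moreover have "\<dots> = (\<Sum>S\<in>SS. ft S * (prod_mset (image_mset (w c) S) * pmf ?P S))"
      by (intro sum.cong refl arg_cong2[where f="(*)"] sample_weight[OF fin]) (rule wq[OF c])
    ultimately show ?thesis by simp
  qed
  have "measure_pmf.prob (bind_pmf (bind_pmf (pmf_of_set C) (\<lambda>c. sample_pmf m (qs c))) V) A
      = (\<integral>c. measure_pmf.prob (bind_pmf (sample_pmf m (qs c)) V) A \<partial>pmf_of_set C)"
    unfolding bind_assoc_pmf by (rule measure_bind_real)
  also have "\<dots> = (\<Sum>c\<in>C. (\<integral>S. f S \<partial>sample_pmf m (qs c))) / real (card C)"
    using finC neC by (simp add: integral_pmf_of_set measure_bind_real f_def)
  also have "\<dots> \<ge> (\<Sum>c\<in>C. \<Sum>S\<in>SS. ft S * (prod_mset (image_mset (w c) S) * pmf ?P S)) / real (card C)"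
    using Ic finC neC by (intro divide_right_mono sum_mono) auto
  finally have L1: "measure_pmf.prob (bind_pmf (bind_pmf (pmf_of_set C) (\<lambda>c. sample_pmf m (qs c))) V) A
      \<ge> (\<Sum>c\<in>C. \<Sum>S\<in>SS. ft S * (prod_mset (image_mset (w c) S) * pmf ?P S)) / real (card C)" .
  have "(\<Sum>c\<in>C. \<Sum>S\<in>SS. ft S * (prod_mset (image_mset (w c) S) * pmf ?P S))
      = (\<Sum>S\<in>SS. ft S * pmf ?P S * (\<Sum>c\<in>C. prod_mset (image_mset (w c) S)))"
    by (subst sum.swap) (simp add: sum_distrib_left mult_ac)
  also have "\<dots> \<ge> (\<Sum>S\<in>SS. ft S * pmf ?P S * (if GL S then real (card C) else 0))"
  proof (intro sum_mono)
    fix S assume "S \<in> SS"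
    show "ft S * pmf ?P S * (if GL S then real (card C) else 0)
        \<le> ft S * pmf ?P S * (\<Sum>c\<in>C. prod_mset (image_mset (w c) S))"
    proof (cases "GL S \<and> S \<in> set_pmf ?P")
      case True
      then show ?thesis using avg by simp
    next
      case False
      have "0 \<le> ft S * pmf ?P S * (\<Sum>c\<in>C. prod_mset (image_mset (w c) S))"
        using ft01 wnn by (intro mult_nonneg_nonneg sum_nonneg prod_mset_nonneg') auto
      then show ?thesis using False by (auto simp: set_pmf_eq)
    qed
  qed
  also have "(\<Sum>S\<in>SS. ft S * pmf ?P S * (if GL S then real (card C) else 0))
      = real (card C) * (\<Sum>S\<in>SS. (ft S * indicator {S. GL S} S) * pmf ?P S)"
    by (auto simp: sum_distrib_left indicator_def intro!: sum.cong)
  finally have L2': "real (card C) * (\<Sum>S\<in>SS. (ft S * indicator {S. GL S} S) * pmf ?P S)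
      \<le> (\<Sum>c\<in>C. \<Sum>S\<in>SS. ft S * (prod_mset (image_mset (w c) S) * pmf ?P S))" .
  have cpos: "0 < real (card C)" using finC neC by (simp add: card_gt_0_iff)
  have L2: "(\<Sum>c\<in>C. \<Sum>S\<in>SS. ft S * (prod_mset (image_mset (w c) S) * pmf ?P S)) / real (card C)
      \<ge> (\<Sum>S\<in>SS. (ft S * indicator {S. GL S} S) * pmf ?P S)"
    using L2' cpos by (simp add: pos_le_divide_eq mult.commute)
  have L3: "(\<Sum>S\<in>SS. (ft S * indicator {S. GL S} S) * pmf ?P S) = (\<integral>S. ft S * indicator {S. GL S} S \<partial>?P)"
    using set_sample[of m p] unfolding SS_def by (intro integral_measure_pmf_real[symmetric] finite_msets[OF fin]) auto
  have L4: "(\<integral>S. f S \<partial>?P) \<le> (\<integral>S. ft S * indicator {S. GL S} S + indicator {S. \<not> Good S} S + indicator {S. \<not> GL S} S \<partial>?P)"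
  proof (intro integral_mono)
    show "integrable ?P f" by (rule intf)
    show "integrable ?P (\<lambda>S. ft S * indicator {S. GL S} S + indicator {S. \<not> Good S} S + indicator {S. \<not> GL S} S)"
      using finite_sample[OF fin] by (simp add: integrable_measure_pmf_finite)
    fix S show "f S \<le> ft S * indicator {S. GL S} S + indicator {S. \<not> Good S} S + indicator {S. \<not> GL S} S"
      using f01[of S] by (auto simp: ft_def indicator_def)
  qed
  also have "\<dots> = (\<integral>S. ft S * indicator {S. GL S} S \<partial>?P) + measure_pmf.prob ?P {S. \<not> Good S} + measure_pmf.prob ?P {S. \<not> GL S}"
    using finite_sample[OF fin] by (simp add: integrable_measure_pmf_finite)
  finally have L5: "(\<integral>S. f S \<partial>?P) - \<epsilon> \<le> (\<integral>S. ft S * indicator {S. GL S} S \<partial>?P)"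
    using eps by simp
  have "measure_pmf.prob (bind_pmf ?P V) A = (\<integral>S. f S \<partial>?P)"
    by (simp add: measure_bind_real f_def)
  then show ?thesis using L1 L2 L3 L5 by linarith
qed



lemma tv_upper:
  assumes "\<And>A. measure_pmf.prob P A - \<epsilon> \<le> measure_pmf.prob Q A"
  shows "tv_dist P Q \<le> \<epsilon>"
  unfolding tv_dist_def
proof (rule cSUP_least)
  fix A
  have 1: "measure_pmf.prob P A - \<epsilon> \<le> measure_pmf.prob Q A" by (rule assms)
  have 2: "measure_pmf.prob P (- A) - \<epsilon> \<le> measure_pmf.prob Q (- A)" by (rule assms)
  have "measure_pmf.prob P (- A) = 1 - measure_pmf.prob P A"
    using measure_pmf.prob_compl[of A P] by (simp add: Compl_eq_Diff_UNIV)
  moreover have "measure_pmf.prob Q (- A) = 1 - measure_pmf.prob Q A"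
    using measure_pmf.prob_compl[of A Q] by (simp add: Compl_eq_Diff_UNIV)
  ultimately show "\<bar>measure_pmf.prob P A - measure_pmf.prob Q A\<bar> \<le> \<epsilon>" using 1 2 by linarith
qed simp

lemma tv_lower:
  "\<bar>measure_pmf.prob P A - measure_pmf.prob Q A\<bar> \<le> tv_dist P Q"
  unfolding tv_dist_def
proof (rule cSUP_upper)
  show "bdd_above (range (\<lambda>A. \<bar>measure_pmf.prob P A - measure_pmf.prob Q A\<bar>))"
  proof (rule bdd_aboveI)
    fix y assume "y \<in> range (\<lambda>A. \<bar>measure_pmf.prob P A - measure_pmf.prob Q A\<bar>)"
    then obtain B where "y = \<bar>measure_pmf.prob P B - measure_pmf.prob Q B\<bar>" by auto
    moreover have "0 \<le> measure_pmf.prob P B" "measure_pmf.prob P B \<le> 1"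
      "0 \<le> measure_pmf.prob Q B" "measure_pmf.prob Q B \<le> 1" by auto
    ultimately show "y \<le> 1" by linarith
  qed
qed simp

lemma prob_fin_sum:
  assumes "finite X" "set_pmf p \<subseteq> X"
  shows "measure_pmf.prob p E = (\<Sum>x\<in>X \<inter> E. pmf p x)"
proof -
  have "measure_pmf.prob p E = measure_pmf.prob p (E \<inter> set_pmf p)"
    by (simp add: measure_Int_set_pmf)
  also have "\<dots> \<le> measure_pmf.prob p (X \<inter> E)"
    using assms by (intro measure_pmf.finite_measure_mono) auto
  finally have le: "measure_pmf.prob p E \<le> measure_pmf.prob p (X \<inter> E)" .
  have "measure_pmf.prob p (X \<inter> E) \<le> measure_pmf.prob p E"
    by (intro measure_pmf.finite_measure_mono) auto
  with le have "measure_pmf.prob p E = measure_pmf.prob p (X \<inter> E)" by simp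
  also have "\<dots> = (\<Sum>x\<in>X \<inter> E. pmf p x)"
    using assms by (simp add: measure_measure_pmf_finite)
  finally show ?thesis .
qed

lemma size_filter_image:
  "size (filter_mset P (image_mset f S)) = size (filter_mset (\<lambda>x. P (f x)) S)"
  by (induction S) auto

lemma filter_image_fix:
  assumes "\<And>x. P (f x) = P x" "\<And>x. P x \<Longrightarrow> f x = x"
  shows "filter_mset P (image_mset f S) = filter_mset P S"
  using assms by (induction S) auto



lemma prod_mset_filter1:
  fixes w :: "'a \<Rightarrow> real"
  assumes "\<And>x. \<not> P x \<Longrightarrow> w x = 1"
  shows "prod_mset (image_mset w S) = prod_mset (image_mset w (filter_mset P S))"
  using assms by (induction S) auto

lemma prod_mset_if2:
  "prod_mset (image_mset (\<lambda>x. if P x then 2 else 0::real) O')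
     = (if (\<forall>x\<in>#O'. P x) then 2 ^ size O' else 0)"
  by (induction O') auto

lemma distinct_size_card:
  assumes "\<And>d. count M d \<le> 1"
  shows "size M = card (set_mset M)"
  using assms
proof (induction M)
  case empty
  then show ?case by simp
next
  case (add x M)
  have "count (add_mset x M) x \<le> 1" by (rule add.prems)
  then have nx: "x \<notin># M" by (simp add: count_eq_zero_iff)
  have "\<And>d. count M d \<le> 1"
  proof -
    fix d
    have "count M d \<le> count (add_mset x M) d" by simp
    then show "count M d \<le> 1" using add.prems[of d] by linarith
  qed
  then have "size M = card (set_mset M)" by (rule add.IH)
  then show ?case using nx by simp
qed

lemma inj_from_distinct:
  assumes "\<And>d. count (image_mset \<pi> M) d \<le> 1"
  shows "inj_on \<pi> (set_mset M)"
proof (rule inj_onI)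
  fix x y assume x: "x \<in> set_mset M" and y: "y \<in> set_mset M" and e: "\<pi> x = \<pi> y"
  show "x = y"
  proof (rule ccontr)
    assume ne: "x \<noteq> y"
    obtain M' where M': "M = add_mset x M'" using x by (metis multi_member_split)
    have "y \<in># M'" using y ne M' by simp
    then obtain M'' where M'': "M' = add_mset y M''" by (metis multi_member_split)
    have "count (image_mset \<pi> M) (\<pi> x) \<ge> 2" using M' M'' e by simp
    then show False using assms[of "\<pi> x"] by simp
  qed
qed



lemma count_codes:
  fixes \<pi> :: "'a \<Rightarrow> nat" and v :: "'a \<Rightarrow> bool"
  assumes finY: "finite Y" and inj: "inj_on \<pi> Y" and rng: "\<pi> ` Y \<subseteq> {..<n}"
  shows "card {c \<in> PiE {..<n} (\<lambda>_. UNIV). \<forall>x\<in>Y. c (\<pi> x) = v x} = 2 ^ (n - card Y)"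
proof -
  define F where "F l = (if l \<in> \<pi> ` Y then {v (inv_into Y \<pi> l)} else (UNIV::bool set))" for l
  have eq: "{c \<in> PiE {..<n} (\<lambda>_. UNIV). \<forall>x\<in>Y. c (\<pi> x) = v x} = PiE {..<n} F"
  proof (intro set_eqI iffI)
    fix c assume c: "c \<in> {c \<in> PiE {..<n} (\<lambda>_. UNIV). \<forall>x\<in>Y. c (\<pi> x) = v x}"
    show "c \<in> PiE {..<n} F"
    proof (rule PiE_I)
      fix l assume "l \<in> {..<n}"
      show "c l \<in> F l"
      proof (cases "l \<in> \<pi> ` Y")
        case True
        then obtain x where x: "x \<in> Y" "l = \<pi> x" by auto
        then show ?thesis using c inj by (simp add: F_def inv_into_f_f)
      next
        case False
        then show ?thesis by (simp add: F_def)
      qed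
    next
      fix l assume "l \<notin> {..<n}"
      then show "c l = undefined" using c by (auto simp: PiE_def extensional_def)
    qed
  next
    fix c assume c: "c \<in> PiE {..<n} F"
    have "\<forall>x\<in>Y. c (\<pi> x) = v x"
    proof
      fix x assume x: "x \<in> Y"
      then have "\<pi> x \<in> {..<n}" using rng by auto
      then have "c (\<pi> x) \<in> F (\<pi> x)" using c by (auto simp: PiE_def)
      then show "c (\<pi> x) = v x" using x inj by (simp add: F_def inv_into_f_f)
    qed
    moreover have "c \<in> PiE {..<n} (\<lambda>_. UNIV)" using c by (auto simp: PiE_def)
    ultimately show "c \<in> {c \<in> PiE {..<n} (\<lambda>_. UNIV). \<forall>x\<in>Y. c (\<pi> x) = v x}" by simp
  qed
  have "card (PiE {..<n} F) = (\<Prod>l\<in>{..<n}. card (F l))" by (simp add: card_PiE)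
  also have "\<dots> = (\<Prod>l\<in>{..<n}. if l \<in> \<pi> ` Y then 1 else 2)"
    by (intro prod.cong refl) (simp add: F_def)
  also have "\<dots> = (\<Prod>l\<in>{..<n} - \<pi> ` Y. 2)"
  proof -
    have "(\<Prod>l\<in>{..<n}. if l \<in> \<pi> ` Y then 1 else 2::nat)
        = (\<Prod>l\<in>{..<n} - \<pi> ` Y. if l \<in> \<pi> ` Y then 1 else 2) * (\<Prod>l\<in>\<pi> ` Y. if l \<in> \<pi> ` Y then 1 else 2)"
      using rng by (intro prod.subset_diff) auto
    then show ?thesis by simp
  qed
  also have "\<dots> = 2 ^ (n - card Y)"
    using rng card_image[OF inj] by (simp add: card_Diff_subset finite_subset[OF rng])
  finally show ?thesis using eq by simp
qed



lemma pF_zero: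
  "x \<notin> insert (0,0) (insert (i, 2*j+2) (B i \<times> {2*j+1})) \<Longrightarrow> pF B i j k x = 0"
  by (auto simp: pF_def indicator_def)

lemma pF_odd:
  "snd x = 2*j+1 \<Longrightarrow> pF B i j k x = (1 / real j - 1 / real k) * (indicator (B i) (fst x) / real (card (B i)))"
  by (cases x) (auto simp: pF_def indicator_def)

lemma pF_ind: "pF B i j k (i, 2*j+2) = 1 / real k"
  by (simp add: pF_def indicator_def)

lemma pF_other:
  "snd x \<noteq> 2*j+1 \<Longrightarrow> x \<noteq> (i, 2*j+2) \<Longrightarrow> pF B i j k x = (1 - 1 / real j) * (if x = (0,0) then 1 else 0)"
  by (cases x) (auto simp: pF_def indicator_def)

lemma Bc_card:
  fixes c :: "nat \<Rightarrow> bool"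
  shows "card {l. l < 2*n \<and> c (l div 2) = odd l} = n"
proof -
  have eq: "{l. l < 2*n \<and> c (l div 2) = odd l} = (\<lambda>d. 2*d + (if c d then 1 else 0)) ` {..<n}"
  proof (intro set_eqI iffI)
    fix l assume "l \<in> {l. l < 2*n \<and> c (l div 2) = odd l}"
    then have l: "l < 2*n" "c (l div 2) = odd l" by auto
    have "l = 2 * (l div 2) + (if c (l div 2) then 1 else 0)" using l(2) by (auto elim: oddE)
    moreover have "l div 2 < n" using l(1) by auto
    ultimately show "l \<in> (\<lambda>d. 2*d + (if c d then 1 else 0)) ` {..<n}" by blast
  next
    fix l assume "l \<in> (\<lambda>d. 2*d + (if c d then 1 else 0)) ` {..<n}"
    then obtain d where d: "d < n" "l = 2*d + (if c d then 1 else 0)" by auto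
    then have "l div 2 = d" by auto
    then show "l \<in> {l. l < 2*n \<and> c (l div 2) = odd l}" using d by auto
  qed
  have "inj_on (\<lambda>d. 2*d + (if c d then 1 else 0::nat)) {..<n}"
  proof (rule inj_onI)
    fix a b assume "2*a + (if c a then 1 else 0::nat) = 2*b + (if c b then 1 else 0)"
    then have "(2*a + (if c a then 1 else 0::nat)) div 2 = (2*b + (if c b then 1 else 0)) div 2" by simp
    then show "a = b" by auto
  qed
  then show ?thesis unfolding eq by (simp add: card_image)
qed



theorem lemma5p5:
  fixes B :: "nat \<Rightarrow> nat set" and g :: "nat \<Rightarrow> nat"
  assumes enum: "range B = {A. finite A}"
    and sl: "superlinear g"
  shows "\<forall>\<alpha>::real. \<alpha> \<ge> 1 \<longrightarrow> (\<exists>\<eta> \<gamma>'::real. 0 < \<eta> \<and> \<eta> < 1 \<and> 0 < \<gamma>' \<and> \<gamma>' < 1 \<and>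
     (\<forall>m::nat. m \<ge> 1 \<longrightarrow> (\<exists>p \<in> Cg B g. \<exists>Q :: (nat \<times> nat) pmf pmf. set_pmf Q \<subseteq> Cg B g \<and>
        (\<forall>q \<in> set_pmf Q. tv_dist p q \<ge> 4 * \<alpha> * budget_sub \<eta> + 4 * \<gamma>') \<and>
        tv_dist (adv_apply (Vsub \<eta>) (sample_pmf m p))
                (adv_apply (Vsub \<eta>) (mix_sample_pmf m Q)) \<le> 1 / 8)))"
proof (intro allI impI)
  fix \<alpha> :: real assume \<alpha>: "\<alpha> \<ge> 1"
  have "eventually (\<lambda>j. 256 * \<alpha> \<le> real (g j) / real j) sequentially"
    using sl unfolding superlinear_def filterlim_at_top by blast
  then obtain N where N: "\<And>j. j \<ge> N \<Longrightarrow> 256 * \<alpha> \<le> real (g j) / real j"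
    by (auto simp: eventually_sequentially)
  define j where "j = Suc N"
  have j1: "1 \<le> j" by (simp add: j_def)
  have jpos: "0 < real j" using j1 by simp
  define k where "k = g j"
  have kge: "256 * \<alpha> * real j \<le> real k"
    using N[of j] jpos by (simp add: j_def k_def pos_le_divide_eq)
  have "256 * real j * 1 \<le> 256 * real j * \<alpha>" using \<alpha> jpos by (intro mult_left_mono) auto
  then have kj: "256 * real j \<le> real k" using kge by (simp add: algebra_simps)
  have jk: "j \<le> k" using kj jpos by linarith
  have kpos: "0 < real k" using kj jpos by linarith
  have jg: "j \<le> g j" using jk by (simp add: k_def)
  define \<eta> :: real where "\<eta> = 16 / real k"
  define \<gamma> :: real where "\<gamma> = 1 / (32 * real j)"
  have \<eta>pos: "0 < \<eta>" using kpos by (simp add: \<eta>_def)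
  have \<eta>1: "\<eta> < 1" using kj jpos by (simp add: \<eta>_def)
  have \<gamma>pos: "0 < \<gamma>" using jpos by (simp add: \<gamma>_def)
  have \<gamma>1: "\<gamma> < 1" using j1 by (simp add: \<gamma>_def)
  define a where "a = 1 / real j - 1 / real k"
  have a_nn: "0 \<le> a" using jk jpos by (simp add: a_def frac_le)
  have a_le1: "a \<le> 1"
  proof -
    have "1 / real j \<le> 1" using j1 by simp
    moreover have "0 \<le> 1 / real k" by simp
    ultimately show ?thesis unfolding a_def by linarith
  qed
  have key_ineq: "4 * \<alpha> * \<eta> + 4 * \<gamma> \<le> a / 2"
  proof -
    have e1: "4 * \<alpha> * \<eta> \<le> (1 / real j) / 4"
      using kge jpos kpos \<alpha> by (simp add: \<eta>_def field_simps)
    have e2: "1 / real k \<le> (1 / real j) / 256"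
      using kj jpos kpos by (simp add: field_simps)
    have e3: "4 * \<gamma> = (1 / real j) / 8" by (simp add: \<gamma>_def)
    have e4: "0 \<le> 1 / real j" by simp
    have f1: "4 * \<alpha> * \<eta> + 4 * \<gamma> \<le> (1 / real j) / 4 + (1 / real j) / 8"
      using add_mono[OF e1 eq_refl[OF e3]] .
    have f2: "(1 / real j) / 4 + (1 / real j) / 8 \<le> (1 / real j - 1 / real k) / 2"
    proof -
      have aux: "\<And>t K::real. K \<le> t / 256 \<Longrightarrow> 0 \<le> t \<Longrightarrow> t / 4 + t / 8 \<le> (t - K) / 2"
        by (simp add: field_simps)
      show ?thesis using aux[OF e2 e4] .
    qed
    show ?thesis using order_trans[OF f1 f2] by (simp add: a_def)
  qed
  have M: "\<exists>p \<in> Cg B g. \<exists>Q :: (nat \<times> nat) pmf pmf. set_pmf Q \<subseteq> Cg B g \<and>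
        (\<forall>q \<in> set_pmf Q. tv_dist p q \<ge> 4 * \<alpha> * budget_sub \<eta> + 4 * \<gamma>) \<and>
        tv_dist (adv_apply (Vsub \<eta>) (sample_pmf m p))
                (adv_apply (Vsub \<eta>) (mix_sample_pmf m Q)) \<le> 1 / 8" if m1: "1 \<le> m" for m :: nat
    proof -
    define n where "n = 16 * m * m"
    have npos: "0 < n" using m1 by (simp add: n_def)
    have "{..<2*n} \<in> range B" using enum by simp
    then obtain i0 where i0: "B i0 = {..<2*n}" by auto
    define Bc where "Bc c = {l. l < 2*n \<and> c (l div 2) = odd l}" for c :: "nat \<Rightarrow> bool"
    have Bc_sub: "Bc c \<subseteq> {..<2*n}" for c by (auto simp: Bc_def)
    have Bc_fin: "finite (Bc c)" for c using Bc_sub finite_subset by blast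
    have cardBc: "card (Bc c) = n" for c unfolding Bc_def by (rule Bc_card)
    define ic where "ic c = (SOME i. B i = Bc c)" for c
    have Bic: "B (ic c) = Bc c" for c
    proof -
      have "Bc c \<in> range B" using enum Bc_fin by simp
      then have "\<exists>i. B i = Bc c" by auto
      then show ?thesis unfolding ic_def by (rule someI_ex)
    qed
    have cardB0: "card (B i0) = 2*n" using i0 by simp
    have ic_ne: "ic c \<noteq> i0" for c
    proof
      assume "ic c = i0"
      then have "card (B (ic c)) = 2*n" using cardB0 by simp
      then show False using Bic[of c] cardBc[of c] npos by simp
    qed
    have "0 \<in> {..<2*n}" using npos by simp
    then have B0ne: "B i0 \<noteq> {}" using i0 by (metis empty_iff)
    have Bicne: "B (ic c) \<noteq> {}" for c using Bic[of c] cardBc[of c] npos by auto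
    have finB0: "finite (B i0)" using i0 by simp
    have finBic: "finite (B (ic c))" for c using Bic Bc_fin by simp
    define p where "p = pijk B i0 j k"
    define qs where "qs c = pijk B (ic c) j k" for c
    define C where "C = PiE {..<n} (\<lambda>_. UNIV :: bool set)"
    define Q where "Q = map_pmf qs (pmf_of_set C)"
    have finC: "finite C" by (simp add: C_def finite_PiE)
    have neC: "C \<noteq> {}" by (simp add: C_def PiE_eq_empty_iff)
    have cardC: "real (card C) = 2 ^ n" by (simp add: C_def card_PiE)
    have pmf_p: "pmf p x = pF B i0 j k x" for x
      unfolding p_def using pmf_pijk[of B i0 j k, OF finB0 B0ne j1 jk] .
    have pmf_q: "pmf (qs c) x = pF B (ic c) j k x" for c x
      unfolding qs_def using pmf_pijk[of B "ic c" j k, OF finBic Bicne j1 jk] .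
    define X0 where "X0 = insert (0,0) (insert (i0, 2*j+2) ({..<2*n} \<times> {2*j+1}))"
    have finX0: "finite X0" by (simp add: X0_def)
    have supp_p: "set_pmf p \<subseteq> X0"
    proof
      fix x assume "x \<in> set_pmf p"
      then have "pF B i0 j k x \<noteq> 0" by (simp add: set_pmf_eq pmf_p)
      then show "x \<in> X0" using pF_zero[of x i0 j B k] i0 unfolding X0_def by blast
    qed
    have fin_p: "finite (set_pmf p)" using finite_subset[OF supp_p finX0] .
    have odd_p: "pmf p x = a / (2 * real n)" if "snd x = 2*j+1" "fst x < 2*n" for x
      using that by (simp add: pmf_p pF_odd cardB0 i0 a_def)
    have odd_p_le: "pmf p x \<le> 1 / (2 * real n)" if "snd x = 2*j+1" for x
    proof -
      have "pmf p x = a * (indicator (B i0) (fst x) / real (2*n))"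
        using that by (simp add: pmf_p pF_odd cardB0 a_def)
      also have "\<dots> \<le> 1 * (1 / real (2*n))"
        using a_nn a_le1 npos by (intro mult_mono) (auto simp: indicator_def)
      finally show ?thesis by simp
    qed
    show "\<exists>p \<in> Cg B g. \<exists>Q :: (nat \<times> nat) pmf pmf. set_pmf Q \<subseteq> Cg B g \<and>
        (\<forall>q \<in> set_pmf Q. tv_dist p q \<ge> 4 * \<alpha> * budget_sub \<eta> + 4 * \<gamma>) \<and>
        tv_dist (adv_apply (Vsub \<eta>) (sample_pmf m p))
                (adv_apply (Vsub \<eta>) (mix_sample_pmf m Q)) \<le> 1 / 8"
    proof (intro bexI[of _ p] exI[of _ Q] conjI ballI)
      show "p \<in> Cg B g"
        unfolding Cg_def valid_param_def p_def k_def using j1 jg B0ne by blast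
      show "set_pmf Q \<subseteq> Cg B g"
      proof
        fix q assume "q \<in> set_pmf Q"
        then obtain c where "q = qs c" using finC neC by (auto simp: Q_def)
        then show "q \<in> Cg B g"
          unfolding Cg_def valid_param_def qs_def k_def using j1 jg Bicne by blast
      qed
    next
      fix q assume "q \<in> set_pmf Q"
      then obtain c where qc: "q = qs c" using finC neC by (auto simp: Q_def)
      define A where "A = ({..<2*n} - Bc c) \<times> {2*j+1}"
      have finA: "finite A" by (simp add: A_def)
      have cardA: "card A = n"
        using cardBc[of c] Bc_sub[of c] Bc_fin[of c]
        by (simp add: A_def card_cartesian_product card_Diff_subset)
      have "measure_pmf.prob p A = (\<Sum>x\<in>A. pmf p x)"
        using finA by (simp add: measure_measure_pmf_finite)
      also have "\<dots> = (\<Sum>x\<in>A. a / (2 * real n))"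
        by (intro sum.cong refl odd_p) (auto simp: A_def)
      also have "\<dots> = a / 2" using cardA npos by simp
      finally have pA: "measure_pmf.prob p A = a / 2" .
      have "measure_pmf.prob q A = (\<Sum>x\<in>A. pmf q x)"
        using finA by (simp add: measure_measure_pmf_finite)
      also have "\<dots> = (\<Sum>x\<in>A. 0)"
        unfolding qc by (intro sum.cong refl) (auto simp: A_def pmf_q pF_odd Bic)
      finally have qA: "measure_pmf.prob q A = 0" by simp
      have "\<bar>measure_pmf.prob p A - measure_pmf.prob q A\<bar> \<le> tv_dist p q" by (rule tv_lower)
      then have "a / 2 \<le> tv_dist p q" using pA qA a_nn by simp
      then show "4 * \<alpha> * budget_sub \<eta> + 4 * \<gamma> \<le> tv_dist p q"
        using key_ineq by (simp add: budget_sub_def)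
    next
      show "tv_dist (adv_apply (Vsub \<eta>) (sample_pmf m p))
                (adv_apply (Vsub \<eta>) (mix_sample_pmf m Q)) \<le> 1 / 8"
      proof -
      define rho where "rho c x = (if x = (i0, 2*j+2) then (ic c, 2*j+2)
                                 else if x = (ic c, 2*j+2) then (i0, 2*j+2) else x)" for c x
      define w where "w c x = (if snd x = 2*j+1 then (if fst x \<in> Bc c then 2 else 0) else (1::real))" for c x
      define Good where "Good S = (real (size (ind S)) \<le> \<eta> * real (size S))" for S
      define GL where "GL S = (\<not> badp (\<lambda>x. snd x = 2*j+1) (\<lambda>x. fst x div 2) S)" for S
      have rho_snd: "snd (rho c x) = snd x" for c x by (simp add: rho_def)
      have rho_inv: "rho c (rho c x) = x" for c x using ic_ne[of c] by (auto simp: rho_def)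
      have rho_inj: "inj (rho c)" for c by (metis injI rho_inv)
      have wq: "pmf (map_pmf (rho c) (qs c)) x = w c x * pmf p x" if "c \<in> C" for c x
      proof -
        have "pmf (map_pmf (rho c) (qs c)) x = pmf (map_pmf (rho c) (qs c)) (rho c (rho c x))"
          by (simp add: rho_inv)
        also have "\<dots> = pmf (qs c) (rho c x)" by (rule pmf_map_inj'[OF rho_inj])
        finally have e: "pmf (map_pmf (rho c) (qs c)) x = pF B (ic c) j k (rho c x)" by (simp add: pmf_q)
        show ?thesis
        proof (cases "snd x = 2*j+1")
          case True
          then have rx: "rho c x = x" by (auto simp: rho_def)
          show ?thesis
          proof (cases "fst x \<in> Bc c")
            case True2: True
            then have "fst x < 2*n" using Bc_sub by auto
            then show ?thesis using True True2 npos
              by (simp add: e rx pF_odd Bic cardBc w_def odd_p a_def[symmetric])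
          next
            case False
            then show ?thesis using True by (simp add: e rx pF_odd Bic w_def)
          qed
        next
          case False
          have w1: "w c x = 1" using False by (simp add: w_def)
          show ?thesis
          proof (cases "x = (i0, 2*j+2)")
            case True
            have r: "rho c x = (ic c, 2*j+2)" using True by (simp add: rho_def)
            have l: "pmf (map_pmf (rho c) (qs c)) x = 1 / real k"
              using e r pF_ind[of B "ic c" j k] by simp
            have rr: "pmf p x = 1 / real k" using True pF_ind[of B i0 j k] pmf_p by simp
            show ?thesis using l rr w1 by simp
          next
            case ne0: False
            show ?thesis
            proof (cases "x = (ic c, 2*j+2)")
              case True
              have "pF B (ic c) j k (i0, 2*j+2) = 0"
                using ic_ne[of c] by (subst pF_other) auto
              moreover have "pF B i0 j k (ic c, 2*j+2) = 0"
                using ic_ne[of c] by (subst pF_other) auto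
              moreover have r: "rho c x = (i0, 2*j+2)" using True ic_ne[of c] by (simp add: rho_def)
              ultimately have l: "pmf (map_pmf (rho c) (qs c)) x = 0" and rr: "pmf p x = 0"
                using e True pmf_p by simp_all
              show ?thesis using l rr by simp
            next
              case False
              then have rx: "rho c x = x" using ne0 by (simp add: rho_def)
              have "pF B (ic c) j k x = (1 - 1 / real j) * (if x = (0,0) then 1 else 0)"
                using False \<open>snd x \<noteq> 2*j+1\<close> by (rule pF_other[rotated])
              moreover have "pF B i0 j k x = (1 - 1 / real j) * (if x = (0,0) then 1 else 0)"
                using ne0 \<open>snd x \<noteq> 2*j+1\<close> by (rule pF_other[rotated])
              ultimately show ?thesis by (simp add: e w1 rx pmf_p)
            qed
          qed
        qed
      qed
      have ind_rho: "(\<lambda>x. is_ind (rho c x)) = is_ind" for c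
        by (simp add: fun_eq_iff is_ind_def rho_snd)
      have invG: "Good (image_mset (rho c) S) = Good S" for c S
        unfolding Good_def ind_def size_filter_image ind_rho by simp
      have invV: "Vsub \<eta> (image_mset (rho c) S) = Vsub \<eta> S" if "Good S" for c S
      proof -
        have f1: "filter_mset is_const (image_mset (rho c) S) = filter_mset is_const S"
          by (rule filter_image_fix) (auto simp: is_const_def rho_def)
        have f2: "filter_mset is_odd (image_mset (rho c) S) = filter_mset is_odd S"
          by (rule filter_image_fix) (auto simp: is_odd_def rho_def rho_snd)
        have f3: "size (filter_mset is_ind (image_mset (rho c) S)) = size (filter_mset is_ind S)"
          unfolding size_filter_image ind_rho by simp
        show ?thesis using that unfolding Vsub_def Good_def Let_def noind_def ind_def
          by (simp add: f1 f2 f3)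
      qed
      have avg: "(\<Sum>c\<in>C. prod_mset (image_mset (w c) S)) = real (card C)"
        if S: "S \<in> set_pmf (sample_pmf m p)" and gl: "GL S" for S
      proof -
        define O' where "O' = filter_mset (\<lambda>x. snd x = 2*j+1) S"
        define \<pi> where "\<pi> = (\<lambda>x::nat \<times> nat. fst x div 2)"
        have Ssub: "set_mset S \<subseteq> X0" using set_sample[of m p] supp_p S by blast
        have Ofst: "fst x < 2*n" if "x \<in># O'" for x
        proof -
          have "x \<in> X0" "snd x = 2*j+1" using that Ssub by (auto simp: O'_def)
          then show ?thesis by (auto simp: X0_def)
        qed
        have cnt: "\<And>d. count (image_mset \<pi> O') d \<le> 1"
          using gl by (simp add: GL_def badp_def O'_def \<pi>_def)
        have injO: "inj_on \<pi> (set_mset O')" by (rule inj_from_distinct[OF cnt])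
        define Y where "Y = set_mset O'"
        have sizeO: "size O' = card Y"
        proof -
          have "size (image_mset \<pi> O') = card (set_mset (image_mset \<pi> O'))"
            by (rule distinct_size_card[OF cnt])
          also have "\<dots> = card (\<pi> ` Y)" by (simp add: Y_def)
          also have "\<dots> = card Y" using injO by (simp add: Y_def card_image)
          finally show ?thesis by simp
        qed
        have rngY: "\<pi> ` Y \<subseteq> {..<n}"
        proof
          fix d assume "d \<in> \<pi> ` Y"
          then obtain x where x: "x \<in># O'" "d = fst x div 2" by (auto simp: Y_def \<pi>_def)
          then show "d \<in> {..<n}" using Ofst[OF x(1)] by auto
        qed
        have Yle: "card Y \<le> n"
        proof -
          have "card Y = card (\<pi> ` Y)" using injO by (simp add: Y_def card_image)
          also have "\<dots> \<le> card {..<n}" using rngY by (intro card_mono) auto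
          finally show ?thesis by simp
        qed
        have W: "prod_mset (image_mset (w c) S)
                 = (if \<forall>x\<in>#O'. c (\<pi> x) = odd (fst x) then 2 ^ size O' else 0)" for c
        proof -
          have "prod_mset (image_mset (w c) S) = prod_mset (image_mset (w c) O')"
            unfolding O'_def by (rule prod_mset_filter1) (simp add: w_def)
          also have "image_mset (w c) O' = image_mset (\<lambda>x. if c (\<pi> x) = odd (fst x) then 2 else 0) O'"
          proof (rule image_mset_cong)
            fix x assume x: "x \<in># O'"
            then have "snd x = 2*j+1" by (simp add: O'_def)
            then show "w c x = (if c (\<pi> x) = odd (fst x) then 2 else 0)"
              using Ofst[OF x] by (simp add: w_def Bc_def \<pi>_def)
          qed
          finally show ?thesis by (simp add: prod_mset_if2)
        qed
        have "(\<Sum>c\<in>C. prod_mset (image_mset (w c) S))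
            = (\<Sum>c\<in>C. if \<forall>x\<in>Y. c (\<pi> x) = odd (fst x) then 2 ^ size O' else 0)"
          by (simp add: W Y_def)
        also have "\<dots> = (\<Sum>c\<in>{c\<in>C. \<forall>x\<in>Y. c (\<pi> x) = odd (fst x)}. 2 ^ size O')"
          by (rule sum.inter_filter[OF finC, symmetric])
        also have "\<dots> = real (card {c\<in>C. \<forall>x\<in>Y. c (\<pi> x) = odd (fst x)}) * 2 ^ size O'"
          by simp
        also have "card {c\<in>C. \<forall>x\<in>Y. c (\<pi> x) = odd (fst x)} = 2 ^ (n - card Y)"
          unfolding C_def by (rule count_codes) (use injO rngY in \<open>auto simp: Y_def\<close>)
        also have "real (2 ^ (n - card Y)) * 2 ^ size O' = (2::real) ^ n"
          using Yle sizeO by (simp add: power_add[symmetric])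
        finally show ?thesis using cardC by simp
      qed
      have eps: "measure_pmf.prob (sample_pmf m p) {S. \<not> Good S}
              + measure_pmf.prob (sample_pmf m p) {S. \<not> GL S} \<le> 1 / 8"
      proof -
        let ?P = "sample_pmf m p"
        have mpos: "0 < real m" using m1 by simp
        have cpos: "0 < \<eta> * real m" using \<eta>pos mpos by simp
        have pind: "measure_pmf.prob p {x. is_ind x} = 1 / real k"
        proof -
          have "X0 \<inter> {x. is_ind x} = {(i0, 2*j+2)}" by (auto simp: X0_def is_ind_def)
          then have "measure_pmf.prob p {x. is_ind x} = pmf p (i0, 2*j+2)"
            using prob_fin_sum[OF finX0 supp_p, of "{x. is_ind x}"] by simp
          also have "\<dots> = 1 / real k" using pF_ind[of B i0 j k] by (simp add: pmf_p)
          finally show ?thesis .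
        qed
        have g1: "measure_pmf.prob ?P {S. \<not> Good S} \<le> 1 / 16"
        proof -
          have "measure_pmf.prob ?P {S. \<not> Good S} = measure_pmf.prob ?P ({S. \<not> Good S} \<inter> set_pmf ?P)"
            by (simp add: measure_Int_set_pmf)
          also have "\<dots> \<le> measure_pmf.prob ?P {S. \<eta> * real m \<le> real (size (filter_mset is_ind S))}"
          proof (intro measure_pmf.finite_measure_mono)
            show "{S. \<not> Good S} \<inter> set_pmf ?P \<subseteq> {S. \<eta> * real m \<le> real (size (filter_mset is_ind S))}"
            proof
              fix S assume "S \<in> {S. \<not> Good S} \<inter> set_pmf ?P"
              then have "\<not> Good S" "size S = m" using set_sample[of m p] by auto
              then show "S \<in> {S. \<eta> * real m \<le> real (size (filter_mset is_ind S))}"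
                by (simp add: Good_def ind_def)
            qed
          qed simp
          also have "\<dots> \<le> real m * measure_pmf.prob p {x. is_ind x} / (\<eta> * real m)"
            by (rule markov_count[OF fin_p cpos])
          also have "\<dots> = 1 / 16" using mpos kpos by (simp add: pind \<eta>_def)
          finally show ?thesis .
        qed
        have mass: "measure_pmf.prob p {x. snd x = 2*j+1 \<and> fst x div 2 \<in> D} \<le> real (card D) * (1 / real n)"
          if finD: "finite D" for D
        proof -
          define F where "F = (\<lambda>(d, e). (2*d + e, 2*j+1)) ` (D \<times> {0, 1::nat})"
          have finF: "finite F" using finD by (simp add: F_def)
          have sub: "X0 \<inter> {x. snd x = 2*j+1 \<and> fst x div 2 \<in> D} \<subseteq> F"
          proof
            fix x assume x: "x \<in> X0 \<inter> {x. snd x = 2*j+1 \<and> fst x div 2 \<in> D}"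
            obtain u v where uv: "x = (u, v)" by (cases x)
            have v: "v = 2*j+1" and uD: "u div 2 \<in> D" using x uv by auto
            have e: "x = (\<lambda>(d, e). (2*d + e, 2*j+1)) (u div 2, u mod 2)"
              using uv v mult_div_mod_eq[of 2 u] by simp
            have "(u div 2, u mod 2) \<in> D \<times> {0, 1::nat}" using uD by auto
            then show "x \<in> F" unfolding F_def
              by (rule image_eqI[where f="\<lambda>(d, e). (2*d + e, 2*j+1)", OF e])
          qed
          have "measure_pmf.prob p {x. snd x = 2*j+1 \<and> fst x div 2 \<in> D}
              = (\<Sum>x\<in>X0 \<inter> {x. snd x = 2*j+1 \<and> fst x div 2 \<in> D}. pmf p x)"
            by (rule prob_fin_sum[OF finX0 supp_p])
          also have "\<dots> \<le> (\<Sum>x\<in>F. pmf p x)"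
            by (rule sum_mono2[OF finF sub]) simp
          also have "\<dots> \<le> real (card F) * (1 / (2 * real n))"
            by (rule sum_bounded_above) (auto simp: F_def intro: odd_p_le)
          also have "card F \<le> card (D \<times> {0, 1::nat})" unfolding F_def by (rule card_image_le) (simp add: finD)
          also have "card (D \<times> {0, 1::nat}) = 2 * card D" by (simp add: card_cartesian_product)
          finally show ?thesis using npos by (simp add: divide_right_mono)
        qed
        have g2: "measure_pmf.prob ?P {S. \<not> GL S} \<le> 1 / 16"
        proof -
          have "measure_pmf.prob ?P {S. \<not> GL S} = measure_pmf.prob ?P {S. badp (\<lambda>x. snd x = 2*j+1) (\<lambda>x. fst x div 2) S}"
            by (simp add: GL_def)
          also have "\<dots> \<le> real m * real m * (1 / real n)"
            by (rule coll_bound[OF fin_p]) (use npos mass in auto)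
          also have "\<dots> = 1 / 16" using mpos by (simp add: n_def)
          finally show ?thesis .
        qed
        show ?thesis using g1 g2 by simp
      qed
      show ?thesis
        unfolding adv_apply_def mix_sample_pmf_def Q_def bind_map_pmf
      proof (rule tv_upper)
        fix A
        show "measure_pmf.prob (sample_pmf m p \<bind> Vsub \<eta>) A - 1 / 8
          \<le> measure_pmf.prob (pmf_of_set C \<bind> (\<lambda>x. sample_pmf m (qs x)) \<bind> Vsub \<eta>) A"
          by (rule main_bound[where \<rho>=rho and w=w and Good=Good and GL=GL, OF fin_p finC neC wq _ invG invV avg eps])
            (auto simp: w_def)
      qed
      qed
    qed
    qed
  show "\<exists>\<eta> \<gamma>'::real. 0 < \<eta> \<and> \<eta> < 1 \<and> 0 < \<gamma>' \<and> \<gamma>' < 1 \<and>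
     (\<forall>m::nat. m \<ge> 1 \<longrightarrow> (\<exists>p \<in> Cg B g. \<exists>Q :: (nat \<times> nat) pmf pmf. set_pmf Q \<subseteq> Cg B g \<and>
        (\<forall>q \<in> set_pmf Q. tv_dist p q \<ge> 4 * \<alpha> * budget_sub \<eta> + 4 * \<gamma>') \<and>
        tv_dist (adv_apply (Vsub \<eta>) (sample_pmf m p))
                (adv_apply (Vsub \<eta>) (mix_sample_pmf m Q)) \<le> 1 / 8))"
    using M \<eta>pos \<eta>1 \<gamma>pos \<gamma>1 by blast
qed

end
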